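(* Let $k\ge1$ and $m\ge0$ be integers. The sum of the ending heights over all $k$-Dyck prefixes with exactly $m$ up-steps whose last step is an up-step (equivalently, the total number of down-steps needed to return to the $x$-axis, summed over these prefixes) equals $$\frac1{1+(m+1)(k+1)}\binom{1+(m+1)(k+1)}{m+1}-\frac1{1+m(k+1)}\binom{1+m(k+1)}{m}.$$
   Context: A $k$-Dyck prefix is a lattice path starting at $(0,0)$ with up-steps $(1,k)$ and down-steps $(1,-1)$ that never goes below the $x$-axis; the height of a point is its $y$-coordinate. *)

theory Defs
  imports Complex_Main
begin

text \<open>A lattice path is encoded as a list of steps: True = up-step (1,k),
  False = down-step (1,-1).\<close>

definition step_height :: "nat \<Rightarrow> bool \<Rightarrow> int" where
  "step_height k b = (if b then int k else -1)"

definition path_height :: "nat \<Rightarrow> bool list \<Rightarrow> int" where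
  "path_height k p = sum_list (map (step_height k) p)"

definition is_dyck_prefix :: "nat \<Rightarrow> bool list \<Rightarrow> bool" where
  "is_dyck_prefix k p \<longleftrightarrow> (\<forall>i \<le> length p. path_height k (take i p) \<ge> 0)"

definition num_ups :: "bool list \<Rightarrow> nat" where
  "num_ups p = length (filter id p)"

definition up_ending_prefixes :: "nat \<Rightarrow> nat \<Rightarrow> bool list set" where
  "up_ending_prefixes k m =
     {p. is_dyck_prefix k p \<and> num_ups p = m \<and> p \<noteq> [] \<and> last p}"

end

theory Submission
  imports Defs
begin

lemma aux1: fixes a b c x y :: real assumes "x \<noteq> 0" "y + 1 \<noteq> 0"
  shows "a / x * c + b / x * ((x - y) * c / (y+1)) = c * ((a*(y+1) + b*(x-y)) / (x*(y+1)))"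
proof -
  have e1: "a / x * c = (a*c*(y+1)) / (x*(y+1))" using assms by simp
  have e2: "b / x * ((x - y) * c / (y+1)) = (b*(x-y)*c) / (x*(y+1))" by simp
  have "a / x * c + b / x * ((x - y) * c / (y+1)) = (a*c*(y+1) + b*(x-y)*c) / (x*(y+1))"
    unfolding e1 e2 add_divide_distrib by simp
  also have "... = c * ((a*(y+1) + b*(x-y)) / (x*(y+1)))" by (simp add: algebra_simps)
  finally show ?thesis .
qed

lemma aux2: fixes a b c :: real assumes "a \<noteq> 0"
  shows "c / b = a / (a * b) * c"
  using assms by simp

lemma aux3: fixes a b c :: real assumes "b \<noteq> 0"
  shows "a / b * (b * c / x) = a * c / x"
  using assms by simp

definition TT :: "nat \<Rightarrow> nat \<Rightarrow> nat \<Rightarrow> real" where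
  "TT k j u = real (j+1) / real ((k+1)*u+j+1) * real (((k+1)*u+j+1) choose u)"

lemma TT_0: "TT k j 0 = 1"
  by (simp add: TT_def)

lemma TT_1: "TT k j 1 = real (j + 1)"
  by (simp add: TT_def field_simps)

lemma TT_rec: "TT k (Suc j) (Suc u) = TT k (Suc j + k) u + TT k j (Suc u)"
proof -
  define N where "N = (k+1)*(u+1)+j+1"
  have Npos: "N > 0" "N \<ge> u" unfolding N_def by auto
  have e1: "real (Suc u) * real (Suc N choose Suc u) = real (Suc N) * real (N choose u)"
    using Suc_times_binomial[of u N] by (metis of_nat_mult)
  have e2: "real (Suc u) * real (N choose Suc u) = real (N - u) * real (N choose u)"
    using binomial_absorption[of u N] binomial_absorb_comp[of N u] by (metis of_nat_mult)
  have d1: "(k+1)*(Suc u)+Suc j+1 = Suc N" unfolding N_def by (simp add: algebra_simps)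
  have d2: "(k+1)*u+(Suc j + k)+1 = N" unfolding N_def by (simp add: algebra_simps)
  have d3: "(k+1)*(Suc u)+j+1 = N" unfolding N_def by (simp add: algebra_simps)
  have NN: "real N = (real k+1)*(real u+1)+real j+1" unfolding N_def by (simp add: algebra_simps)
  have Nu: "real (N - u) = real N - real u" using Npos by simp
  define c where "c = real (N choose u)"
  have A: "real (Suc N choose Suc u) = real (Suc N) * c / real (Suc u)"
    using e1 unfolding c_def by (simp add: field_simps)
  have B: "real (N choose Suc u) = (real N - real u) * c / (real u + 1)"
    using e2 Nu unfolding c_def by (simp add: field_simps)
  have hN: "real N \<noteq> 0" "real u + 1 \<noteq> 0" using Npos by auto
  have "TT k (Suc j) (Suc u) = real (Suc j + 1) * c / real (Suc u)"
    unfolding TT_def d1 A by (rule aux3) simp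
  also have "... = c * ((real (Suc j + 1) * real N) / (real N * (real u + 1)))"
  proof -
    have "(real (Suc j + 1) * real N) / (real N * (real u + 1)) = real (Suc j + 1) / (real u + 1)"
      using hN by (metis mult.commute mult_divide_mult_cancel_left_if)
    then show ?thesis by (simp only:) (simp add: algebra_simps)
  qed
  also have "real (Suc j + 1) * real N = real (Suc j + k + 1) * (real u + 1) + real (j+1) * (real N - real u)"
    unfolding NN by (simp add: algebra_simps)
  also have "c * ((real (Suc j + k + 1) * (real u + 1) + real (j+1) * (real N - real u)) / (real N * (real u + 1)))
     = real (Suc j + k + 1) / real N * c + real (j+1) / real N * ((real N - real u) * c / (real u + 1))"
    using aux1[OF hN] by simp
  also have "... = TT k (Suc j + k) u + TT k j (Suc u)"
    unfolding TT_def d2 d3 B c_def by simp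
  finally show ?thesis .
qed

lemma TT_zero: "TT k 0 (Suc u) = TT k k u"
proof -
  define N where "N = (k+1)*(u+1)"
  have e1: "real (Suc u) * real (Suc N choose Suc u) = real (Suc N) * real (N choose u)"
    using Suc_times_binomial[of u N] by (metis of_nat_mult)
  have d1: "(k+1)*(Suc u)+0+1 = Suc N" unfolding N_def by (simp add: algebra_simps)
  have d2: "(k+1)*u+k+1 = N" unfolding N_def by (simp add: algebra_simps)
  have NN: "real N = (real k+1)*(real u+1)" unfolding N_def by (simp add: algebra_simps)
  define c where "c = real (N choose u)"
  have A: "real (Suc N choose Suc u) = real (Suc N) * c / real (Suc u)"
    using e1 unfolding c_def by (simp add: field_simps)
  have "TT k 0 (Suc u) = real (0 + 1) * c / real (Suc u)"
    unfolding TT_def d1 A by (rule aux3) simp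
  also have "... = c / (real u + 1)" by simp
  also have "... = real (k+1) / real N * c"
    unfolding NN using aux2[of "real k + 1" c "real u + 1"] by (simp add: add.commute)
  also have "... = TT k k u" unfolding TT_def d2 c_def by simp
  finally show ?thesis .
qed

lemma ph_Nil[simp]: "path_height k [] = 0"
  by (simp add: path_height_def)

lemma ph_Cons[simp]: "path_height k (b#p) = step_height k b + path_height k p"
  by (simp add: path_height_def)

lemma nu_Cons[simp]: "num_ups (True#p) = Suc (num_ups p)" "num_ups (False#p) = num_ups p"
  by (simp_all add: num_ups_def)

lemma all_le_Suc: "(\<forall>i\<le>Suc n. P i) \<longleftrightarrow> P 0 \<and> (\<forall>i\<le>n. P (Suc i))"
  by (metis Suc_le_mono le0 not0_implies_Suc)

definition okj :: "nat \<Rightarrow> nat \<Rightarrow> bool list \<Rightarrow> bool" where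
  "okj k j p \<longleftrightarrow> (\<forall>i\<le>length p. 0 \<le> int j + path_height k (take i p))"

lemma okj_Nil[simp]: "okj k j []"
  by (simp add: okj_def)

lemma okj_True[simp]: "okj k j (True#p) \<longleftrightarrow> okj k (j+k) p"
  unfolding okj_def by (simp add: all_le_Suc step_height_def algebra_simps)

lemma okj_False[simp]: "okj k j (False#p) \<longleftrightarrow> j > 0 \<and> okj k (j-1) p"
proof (cases "j > 0")
  case True
  then have "int j - 1 = int (j - 1)" by simp
  then show ?thesis unfolding okj_def using True by (simp add: all_le_Suc step_height_def algebra_simps)
next
  case False
  then show ?thesis unfolding okj_def by (auto simp: all_le_Suc step_height_def)
qed

lemma ph_len: "path_height k p + int (length p) = int (k+1) * int (num_ups p)"
proof (induction p)
  case Nil then show ?case by (simp add: num_ups_def)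
next
  case (Cons b p) then show ?case by (cases b) (auto simp: step_height_def algebra_simps)
qed

lemma okj_len: "okj k j p \<Longrightarrow> length p \<le> j + (k+1) * num_ups p"
proof -
  assume "okj k j p"
  then have "0 \<le> int j + path_height k p" unfolding okj_def by (metis order_refl take_all)
  with ph_len[of k p] have "int (length p) \<le> int (j + (k+1) * num_ups p)" by (simp add: algebra_simps)
  then show ?thesis by linarith
qed

definition UU :: "nat \<Rightarrow> nat \<Rightarrow> nat \<Rightarrow> bool list set" where
  "UU k j m = {p. okj k j p \<and> num_ups p = m \<and> p \<noteq> [] \<and> last p}"

lemma finite_UU: "finite (UU k j m)"
proof (rule finite_subset)
  show "UU k j m \<subseteq> {xs. set xs \<subseteq> UNIV \<and> length xs \<le> j + (k+1)*m}"
    unfolding UU_def using okj_len by auto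
  show "finite {xs. set xs \<subseteq> (UNIV::bool set) \<and> length xs \<le> j + (k+1)*m}"
    by (rule finite_lists_length_le) simp
qed

lemma UU_0: "UU k j 0 = {}"
proof -
  have "p \<noteq> [] \<Longrightarrow> last p \<Longrightarrow> num_ups p \<noteq> 0" for p
    unfolding num_ups_def by (metis (full_types) empty_filter_conv id_apply last_in_set length_0_conv)
  then show ?thesis unfolding UU_def by (metis (mono_tags, lifting) empty_Collect_eq)
qed

lemma UU_Suc: "UU k j (Suc m) = ((if m = 0 then {[True]} else {}) \<union> Cons True ` UU k (j+k) m)
   \<union> (if j > 0 then Cons False ` UU k (j-1) (Suc m) else {})"
proof (rule set_eqI)
  fix p
  show "p \<in> UU k j (Suc m) \<longleftrightarrow> p \<in> ((if m = 0 then {[True]} else {}) \<union> Cons True ` UU k (j+k) m)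
   \<union> (if j > 0 then Cons False ` UU k (j-1) (Suc m) else {})"
  proof (cases p)
    case Nil then show ?thesis by (auto simp: UU_def)
  next
    case (Cons b q)
    show ?thesis
    proof (cases b)
      case True
      then show ?thesis using Cons by (cases "q = []") (auto simp: UU_def num_ups_def)
    next
      case False
      then show ?thesis using Cons by (cases "q = []") (auto simp: UU_def num_ups_def)
    qed
  qed
qed

definition GG :: "nat \<Rightarrow> nat \<Rightarrow> nat \<Rightarrow> int" where
  "GG k j m = (\<Sum>p\<in>UU k j m. int j + path_height k p)"

lemma GG_0: "GG k j 0 = 0"
  by (simp add: GG_def UU_0)

lemma GG_Suc: "GG k j (Suc m) = (if m = 0 then int j + int k else 0) + GG k (j+k) m
   + (if j > 0 then GG k (j-1) (Suc m) else 0)"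
proof -
  let ?f = "\<lambda>p. int j + path_height k p"
  let ?A = "(if m = 0 then {[True]} else {}) :: bool list set"
  let ?B = "Cons True ` UU k (j+k) m"
  let ?C = "(if j > 0 then Cons False ` UU k (j-1) (Suc m) else {})"
  have fA: "finite ?A" by simp
  have fB: "finite ?B" using finite_UU by simp
  have fC: "finite ?C" using finite_UU by simp
  have dAB: "?A \<inter> ?B = {}" by (auto simp: UU_def)
  have dABC: "(?A \<union> ?B) \<inter> ?C = {}" by auto
  have sA: "sum ?f ?A = (if m = 0 then int j + int k else 0)" by (simp add: step_height_def)
  have sB: "sum ?f ?B = GG k (j+k) m"
    unfolding GG_def by (subst sum.reindex) (auto simp: step_height_def algebra_simps)
  have sC: "sum ?f ?C = (if j > 0 then GG k (j-1) (Suc m) else 0)"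
  proof (cases "j > 0")
    case True
    have "sum ?f ?C = sum ?f (Cons False ` UU k (j-1) (Suc m))" using True by simp
    also have "... = sum (?f \<circ> Cons False) (UU k (j-1) (Suc m))" by (rule sum.reindex) simp
    also have "... = sum (\<lambda>p. int (j-1) + path_height k p) (UU k (j-1) (Suc m))"
      by (rule sum.cong) (use True in \<open>auto simp: step_height_def of_nat_diff\<close>)
    finally show ?thesis using True unfolding GG_def by simp
  qed simp
  have "GG k j (Suc m) = sum ?f ((?A \<union> ?B) \<union> ?C)" unfolding GG_def by (subst UU_Suc) (rule refl)
  also have "... = sum ?f (?A \<union> ?B) + sum ?f ?C"
    by (rule sum.union_disjoint) (use fA fB fC dABC in auto)
  also have "sum ?f (?A \<union> ?B) = sum ?f ?A + sum ?f ?B"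
    by (rule sum.union_disjoint) (use fA fB dAB in auto)
  finally show ?thesis using sA sB sC by simp
qed

lemma GG_closed: "real_of_int (GG k j m) = TT k j (Suc m) - TT k j m - (if m = 0 then real j else 0)"
proof (induction m arbitrary: j)
  case 0
  then show ?case using TT_0[of k j] TT_1[of k j] by (simp add: GG_0)
next
  case (Suc m)
  note IH = Suc.IH
  show ?case
  proof (induction j)
    case 0
    then show ?case using IH[of k] TT_zero[of k "Suc m"] TT_zero[of k m] TT_0[of k k] GG_Suc[of k 0 m]
      by simp
  next
    case (Suc i)
    then show ?case using IH[of "Suc i + k"] TT_rec[of k i "Suc m"] TT_rec[of k i m] TT_0[of k "Suc i + k"] GG_Suc[of k "Suc i" m]
      by simp
  qed
qed

theorem mainTheorem4:
  fixes k m :: nat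
  assumes "k \<ge> 1"
  shows "real_of_int (\<Sum>p\<in>up_ending_prefixes k m. path_height k p) =
    1 / real (1 + (m+1)*(k+1)) * real ((1 + (m+1)*(k+1)) choose (m+1))
    - 1 / real (1 + m*(k+1)) * real ((1 + m*(k+1)) choose m)"
proof -
  have "up_ending_prefixes k m = UU k 0 m"
    unfolding up_ending_prefixes_def UU_def is_dyck_prefix_def okj_def by simp
  then have "(\<Sum>p\<in>up_ending_prefixes k m. path_height k p) = GG k 0 m"
    unfolding GG_def by simp
  then have "real_of_int (\<Sum>p\<in>up_ending_prefixes k m. path_height k p) = TT k 0 (Suc m) - TT k 0 m"
    using GG_closed[of k 0 m] by simp
  moreover have e1: "(k+1)*Suc m + 0 + 1 = 1 + (m+1)*(k+1)" by (simp add: algebra_simps)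
  moreover have e2: "(k+1)*m + 0 + 1 = 1 + m*(k+1)" by (simp add: algebra_simps)
  moreover have "TT k 0 (Suc m) = 1 / real (1 + (m+1)*(k+1)) * real ((1 + (m+1)*(k+1)) choose (m+1))"
    unfolding TT_def e1 by simp
  moreover have "TT k 0 m = 1 / real (1 + m*(k+1)) * real ((1 + m*(k+1)) choose m)"
    unfolding TT_def e2 by simp
  ultimately show ?thesis by simp
qed

end
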